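(* Let $G$ be a directed graph on $V=\{v_1,\dots,v_n\}$ with edge set $E$. Let $\mathbb F$ be a field and $k\ge1$. Let $\chi:V\to\mathbb F^k$ be any map, and let $y_{ij}\in\mathbb F$ be scalars for all ordered pairs $(i,j)$. Let $E^+$ be a finite set of ordered pairs not in $E$ (inserted edges), and let $E^-\subseteq E$ (deleted edges). Let $G'$ be the directed graph on $V$ with edge set $(E\setminus E^-)\cup E^+$. Define $Q$, $S$, $F$, $\mathcal Z$ for $G$, and $\mathcal Z_{\mathrm{new}}$ for $G'$, as in the context. Let $I\subseteq[n]$ be the set of indices $i$ such that $v_i$ is an endpoint of an edge in $E^+\cup E^-$. Let $Q'=(Q[i,j])_{i,j\in I}$, and let $S'=(S[i])_{i\in I}$, $F'=(F[i])_{i\in I}$ be column vectors. Define the $I\times I$ matrix $\Delta$ by $\Delta[i,j]=y_{ij}$ if $(v_i,v_j)\in E^+$, $\Delta[i,j]=-y_{ij}$ if $(v_i,v_j)\in E^-$, and $\Delta[i,j]=0$ otherwise. Then $$\mathcal Z_{\mathrm{new}}=\mathcal Z+\sum_{i=1}^{k}F'^{T}\,\Delta\,(Q'\Delta)^{i-1}\,S',$$ where all matrix and vector products are taken over the (noncommutative) ring $\Lambda(\mathbb F^k)$, multiplying entries in left-to-right order.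
   Context: $\Lambda(\mathbb F^k)$ is the exterior algebra over $\mathbb F^k$, with product $\wedge$. A vector $v\in\mathbb F^k$ is identified with $\sum_i v[i]e_i\in\Lambda(\mathbb F^k)$, and field scalars commute with everything. A walk in a directed graph $H$ is a sequence $w=(w_1,\dots,w_s)$, $s\ge1$, of vertices with $(w_r,w_{r+1})$ an edge of $H$ for all $r<s$. Vertices may repeat. Its walk extensor is $$\chi(w)=\chi(w_1)\wedge y_{w_1w_2}\chi(w_2)\wedge\cdots\wedge y_{w_{s-1}w_s}\chi(w_s),$$ where $y_{v_av_b}$ means $y_{ab}$. Any walk with more than $k$ vertices has $\chi(w)=0$. For $H=G$, $Q[i,j]$ is the sum of $\chi(w)$ over all walks in $G$ from $v_i$ to $v_j$ with at most $k$ vertices (equivalently, over all walks). Further, $S[i]=\sum_jQ[i,j]$, $F[j]=\sum_iQ[i,j]$ and $\mathcal Z=\sum_{i,j}Q[i,j]$. The quantity $\mathcal Z_{\mathrm{new}}$ is the sum of $\chi(w)$ over all walks $w$ in $G'$ with at most $k$ vertices. *)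

theory Defs
  imports Main
begin

text \<open>An element of the exterior algebra is represented by its coefficient function on
  the basis monomials e_S = e_{s1} wedge ... wedge e_{sm} (s1 < ... < sm), indexed by finite
  sets S of basis indices. Elements of Lambda(F^k) are those supported on subsets of
  {0..<k}; all operations below preserve this.\<close>

type_synonym 'a ext = "nat set \<Rightarrow> 'a"

definition ext_sign :: "nat set \<Rightarrow> nat set \<Rightarrow> 'a::comm_ring_1" where
  "ext_sign A B = (-1) ^ card {(a, b). a \<in> A \<and> b \<in> B \<and> b < a}"

definition ext_wedge :: "'a::comm_ring_1 ext \<Rightarrow> 'a ext \<Rightarrow> 'a ext" where
  "ext_wedge x y = (\<lambda>S. \<Sum>A\<in>Pow S. ext_sign A (S - A) * x A * y (S - A))"

definition ext_zero :: "'a::comm_ring_1 ext" where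
  "ext_zero = (\<lambda>S. 0)"

definition ext_add :: "'a::comm_ring_1 ext \<Rightarrow> 'a ext \<Rightarrow> 'a ext" where
  "ext_add x y = (\<lambda>S. x S + y S)"

definition ext_sum :: "('b \<Rightarrow> 'a::comm_ring_1 ext) \<Rightarrow> 'b set \<Rightarrow> 'a ext" where
  "ext_sum f A = (\<lambda>S. \<Sum>a\<in>A. f a S)"

definition ext_scalar :: "'a::comm_ring_1 \<Rightarrow> 'a ext" where
  "ext_scalar c = (\<lambda>S. if S = {} then c else 0)"

definition ext_vec :: "nat \<Rightarrow> (nat \<Rightarrow> 'a::comm_ring_1) \<Rightarrow> 'a ext" where
  "ext_vec k v = (\<lambda>S. \<Sum>i<k. if S = {i} then v i else 0)"

text \<open>Vertices v_1..v_n are represented by indices 0..<n; edges are pairs of indices.\<close>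

fun is_walk :: "(nat \<times> nat) set \<Rightarrow> nat list \<Rightarrow> bool" where
  "is_walk E [] = False"
| "is_walk E [v] = True"
| "is_walk E (v # u # w) = ((v, u) \<in> E \<and> is_walk E (u # w))"

definition walks :: "nat \<Rightarrow> (nat \<times> nat) set \<Rightarrow> nat list set" where
  "walks n E = {w. is_walk E w \<and> set w \<subseteq> {..<n}}"

fun walk_ext :: "nat \<Rightarrow> (nat \<Rightarrow> nat \<Rightarrow> 'a::comm_ring_1) \<Rightarrow> (nat \<Rightarrow> nat \<Rightarrow> 'a)
                  \<Rightarrow> nat list \<Rightarrow> 'a ext" where
  "walk_ext k \<chi> y [] = ext_scalar 1"
| "walk_ext k \<chi> y [v] = ext_vec k (\<chi> v)"
| "walk_ext k \<chi> y (v # u # w) =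
     ext_wedge (ext_vec k (\<chi> v)) (ext_wedge (ext_scalar (y v u)) (walk_ext k \<chi> y (u # w)))"

definition Qmat :: "nat \<Rightarrow> nat \<Rightarrow> (nat \<times> nat) set \<Rightarrow> (nat \<Rightarrow> nat \<Rightarrow> 'a::comm_ring_1)
                      \<Rightarrow> (nat \<Rightarrow> nat \<Rightarrow> 'a) \<Rightarrow> nat \<Rightarrow> nat \<Rightarrow> 'a ext" where
  "Qmat k n E \<chi> y i j =
     ext_sum (walk_ext k \<chi> y) {w \<in> walks n E. length w \<le> k \<and> hd w = i \<and> last w = j}"

definition Svec :: "nat \<Rightarrow> nat \<Rightarrow> (nat \<times> nat) set \<Rightarrow> (nat \<Rightarrow> nat \<Rightarrow> 'a::comm_ring_1)
                      \<Rightarrow> (nat \<Rightarrow> nat \<Rightarrow> 'a) \<Rightarrow> nat \<Rightarrow> 'a ext" where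
  "Svec k n E \<chi> y i = ext_sum (\<lambda>j. Qmat k n E \<chi> y i j) {..<n}"

definition Fvec :: "nat \<Rightarrow> nat \<Rightarrow> (nat \<times> nat) set \<Rightarrow> (nat \<Rightarrow> nat \<Rightarrow> 'a::comm_ring_1)
                      \<Rightarrow> (nat \<Rightarrow> nat \<Rightarrow> 'a) \<Rightarrow> nat \<Rightarrow> 'a ext" where
  "Fvec k n E \<chi> y j = ext_sum (\<lambda>i. Qmat k n E \<chi> y i j) {..<n}"

definition Zsum :: "nat \<Rightarrow> nat \<Rightarrow> (nat \<times> nat) set \<Rightarrow> (nat \<Rightarrow> nat \<Rightarrow> 'a::comm_ring_1)
                      \<Rightarrow> (nat \<Rightarrow> nat \<Rightarrow> 'a) \<Rightarrow> 'a ext" where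
  "Zsum k n E \<chi> y = ext_sum (\<lambda>(i, j). Qmat k n E \<chi> y i j) ({..<n} \<times> {..<n})"

definition Zwalks :: "nat \<Rightarrow> nat \<Rightarrow> (nat \<times> nat) set \<Rightarrow> (nat \<Rightarrow> nat \<Rightarrow> 'a::comm_ring_1)
                      \<Rightarrow> (nat \<Rightarrow> nat \<Rightarrow> 'a) \<Rightarrow> 'a ext" where
  "Zwalks k n E \<chi> y = ext_sum (walk_ext k \<chi> y) {w \<in> walks n E. length w \<le> k}"

definition ext_mat_mul :: "nat set \<Rightarrow> (nat \<Rightarrow> nat \<Rightarrow> 'a::comm_ring_1 ext)
                             \<Rightarrow> (nat \<Rightarrow> nat \<Rightarrow> 'a ext) \<Rightarrow> nat \<Rightarrow> nat \<Rightarrow> 'a ext" where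
  "ext_mat_mul I A B = (\<lambda>i j. ext_sum (\<lambda>l. ext_wedge (A i l) (B l j)) I)"

fun ext_mat_pow :: "nat set \<Rightarrow> (nat \<Rightarrow> nat \<Rightarrow> 'a::comm_ring_1 ext) \<Rightarrow> nat
                      \<Rightarrow> nat \<Rightarrow> nat \<Rightarrow> 'a ext" where
  "ext_mat_pow I A 0 = (\<lambda>i j. if i = j then ext_scalar 1 else ext_zero)"
| "ext_mat_pow I A (Suc m) = ext_mat_mul I (ext_mat_pow I A m) A"

end

theory Submission
  imports Defs "HOL-Library.Function_Algebras"
begin


lemma sum_fun_apply: "(\<Sum>a\<in>A. f a) x = (\<Sum>a\<in>A. f a x)"
  by (induction A rule: infinite_finite_induct) auto

lemma ext_sum_eq: "ext_sum f A = sum f A"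
  by (simp add: ext_sum_def fun_eq_iff sum_fun_apply)
lemma ext_add_eq: "ext_add x y = x + y"
  by (simp add: ext_add_def fun_eq_iff)
lemma ext_zero_eq: "ext_zero = 0"
  by (simp add: ext_zero_def fun_eq_iff)
lemma ext_scalar_uminus: "ext_scalar (- c) = - ext_scalar c"
  by (simp add: ext_scalar_def fun_eq_iff)

lemma wedge_zero_left[simp]: "ext_wedge 0 y = 0"
  by (simp add: ext_wedge_def fun_eq_iff)
lemma wedge_zero_right[simp]: "ext_wedge x 0 = 0"
  by (simp add: ext_wedge_def fun_eq_iff)
lemma wedge_add_left: "ext_wedge (x + x') y = ext_wedge x y + ext_wedge x' y"
  by (simp add: ext_wedge_def fun_eq_iff algebra_simps sum.distrib)
lemma wedge_add_right: "ext_wedge x (y + y') = ext_wedge x y + ext_wedge x y'"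
  by (simp add: ext_wedge_def fun_eq_iff algebra_simps sum.distrib)
lemma wedge_uminus_right: "ext_wedge x (- y) = - ext_wedge x y"
  by (simp add: ext_wedge_def fun_eq_iff sum_negf)
lemma wedge_uminus_left: "ext_wedge (- x) y = - ext_wedge x y"
  by (simp add: ext_wedge_def fun_eq_iff sum_negf)
lemma wedge_sum_left: "ext_wedge (\<Sum>a\<in>A. f a) y = (\<Sum>a\<in>A. ext_wedge (f a) y)"
proof (induction A rule: infinite_finite_induct)
  case (insert b F) then show ?case by (simp only: sum.insert[OF insert.hyps] wedge_add_left insert.IH)
qed (simp_all add: ext_wedge_def fun_eq_iff)
lemma wedge_sum_right: "ext_wedge x (\<Sum>a\<in>A. f a) = (\<Sum>a\<in>A. ext_wedge x (f a))"
proof (induction A rule: infinite_finite_induct)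
  case (insert b F) then show ?case by (simp only: sum.insert[OF insert.hyps] wedge_add_right insert.IH)
qed (simp_all add: ext_wedge_def fun_eq_iff)

definition ext_inv :: "nat set \<Rightarrow> nat set \<Rightarrow> (nat \<times> nat) set" where
  "ext_inv A B = {(a, b). a \<in> A \<and> b \<in> B \<and> b < a}"

lemma ext_sign_inv: "ext_sign A B = (-1) ^ card (ext_inv A B)"
  by (simp add: ext_sign_def ext_inv_def)

lemma ext_inv_finite: "finite A \<Longrightarrow> finite B \<Longrightarrow> finite (ext_inv A B)"
  by (rule finite_subset[of _ "A \<times> B"]) (auto simp: ext_inv_def)

lemma sign_identity:
  assumes "finite A" "finite B" "finite C" "A \<inter> B = {}" "A \<inter> C = {}" "B \<inter> C = {}"
  shows "(ext_sign A (B \<union> C) * ext_sign B C :: 'a::comm_ring_1)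
       = ext_sign (A \<union> B) C * ext_sign A B"
proof -
  have 1: "ext_inv A (B \<union> C) = ext_inv A B \<union> ext_inv A C" "ext_inv (A \<union> B) C = ext_inv A C \<union> ext_inv B C"
    by (auto simp: ext_inv_def)
  have 2: "card (ext_inv A (B \<union> C)) = card (ext_inv A B) + card (ext_inv A C)"
    unfolding 1 using assms by (intro card_Un_disjoint ext_inv_finite) (auto simp: ext_inv_def)
  have 3: "card (ext_inv (A \<union> B) C) = card (ext_inv A C) + card (ext_inv B C)"
    unfolding 1 using assms by (intro card_Un_disjoint ext_inv_finite) (auto simp: ext_inv_def)
  show ?thesis unfolding ext_sign_inv 2 3 by (simp add: power_add algebra_simps)
qed

lemma wedge_assoc: "ext_wedge x (ext_wedge y z) = ext_wedge (ext_wedge x y) z"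
proof (rule ext)
  fix S :: "nat set"
  show "ext_wedge x (ext_wedge y z) S = ext_wedge (ext_wedge x y) z S"
  proof (cases "finite S")
    case False
    then have "infinite (Pow S)" by simp
    then show ?thesis by (simp add: ext_wedge_def)
  next
    case fin: True
    have L: "ext_wedge x (ext_wedge y z) S =
      (\<Sum>(A,B)\<in>(SIGMA A:Pow S. Pow (S - A)). ext_sign A (S - A) * ext_sign B (S - A - B) * x A * y B * z (S - A - B))" (is "_ = ?rhs")
    proof -
      have "ext_wedge x (ext_wedge y z) S = (\<Sum>A\<in>Pow S. \<Sum>B\<in>Pow (S - A). ext_sign A (S - A) * ext_sign B (S - A - B) * x A * y B * z (S - A - B))"
        unfolding ext_wedge_def by (rule sum.cong[OF refl]) (simp add: sum_distrib_left mult_ac)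
      also have "\<dots> = ?rhs" using fin by (subst sum.Sigma) auto
      finally show ?thesis .
    qed
    have R: "ext_wedge (ext_wedge x y) z S =
      (\<Sum>(C,A)\<in>(SIGMA C:Pow S. Pow C). ext_sign C (S - C) * ext_sign A (C - A) * x A * y (C - A) * z (S - C))" (is "_ = ?rhs")
    proof -
      have "ext_wedge (ext_wedge x y) z S = (\<Sum>C\<in>Pow S. \<Sum>A\<in>Pow C. ext_sign C (S - C) * ext_sign A (C - A) * x A * y (C - A) * z (S - C))"
        unfolding ext_wedge_def by (rule sum.cong[OF refl]) (simp add: sum_distrib_left sum_distrib_right mult_ac)
      also have "\<dots> = ?rhs" using fin by (subst sum.Sigma) (auto intro: finite_subset)
      finally show ?thesis .
    qed
    show ?thesis unfolding L R
    proof (rule sum.reindex_bij_witness[where j="\<lambda>(A,B). (A \<union> B, A)" and i="\<lambda>(C,A). (A, C - A)"])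
      fix a assume "a \<in> (SIGMA A:Pow S. Pow (S - A))"
      then obtain A B where a: "a = (A,B)" "A \<subseteq> S" "B \<subseteq> S - A" by auto
      have "B \<subseteq> S" using a by auto
      then have fA: "finite A" "finite B" "finite (S - A - B)" using a fin finite_subset by auto
      define C where "C = S - A - B"
      have fC: "finite C" using fA C_def by simp
      have e1: "S - A = B \<union> C" "S - (A \<union> B) = C" "A \<union> B - A = B" using a C_def by auto
      have "ext_sign A (S - A) * ext_sign B C = (ext_sign (A \<union> B) C * ext_sign A B :: 'a)"
        unfolding e1(1) using sign_identity[OF fA(1,2) fC] a C_def by auto
      then have X: "ext_sign A (S - A) * ext_sign B (S - A - B) = (ext_sign (A \<union> B) (S - A - B) * ext_sign A B :: 'a)"
        by (simp only: C_def)
      have Y: "S - (A \<union> B) = S - A - B" by auto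
      show "(case (case a of (A, B) \<Rightarrow> (A \<union> B, A)) of
           (C, A) \<Rightarrow> ext_sign C (S - C) * ext_sign A (C - A) * x A * y (C - A) * z (S - C)) =
          (case a of (A, B) \<Rightarrow> ext_sign A (S - A) * ext_sign B (S - A - B) * x A * y B * z (S - A - B))"
        by (simp only: a prod.case e1(3) Y X)
    qed auto
  qed
qed




definition good :: "nat \<Rightarrow> nat \<Rightarrow> 'a::comm_ring_1 ext \<Rightarrow> bool" where
  "good k d x \<longleftrightarrow> (\<forall>S. x S \<noteq> 0 \<longrightarrow> S \<subseteq> {..<k} \<and> d \<le> card S)"

lemma good_zero[simp]: "good k d 0"
  by (simp add: good_def)
lemma good_add: "good k d x \<Longrightarrow> good k d y \<Longrightarrow> good k d (x + y)"
  unfolding good_def by (metis add.left_neutral add.right_neutral plus_fun_apply)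
lemma good_uminus: "good k d x \<Longrightarrow> good k d (- x)"
  by (auto simp: good_def)
lemma good_sum: "(\<And>a. a \<in> A \<Longrightarrow> good k d (f a)) \<Longrightarrow> good k d (\<Sum>a\<in>A. f a)"
  by (induction A rule: infinite_finite_induct) (auto intro: good_add)
lemma good_mono: "good k d x \<Longrightarrow> d' \<le> d \<Longrightarrow> good k d' x"
  by (auto simp: good_def)
lemma good_vec: "good k 1 (ext_vec k v)"
proof -
  have "\<And>S. ext_vec k v S \<noteq> 0 \<Longrightarrow> \<exists>i<k. S = {i}"
  proof (rule ccontr)
    fix S assume "ext_vec k v S \<noteq> 0" "\<not> (\<exists>i<k. S = {i})"
    then show False by (auto simp: ext_vec_def)
  qed
  then show ?thesis by (fastforce simp: good_def)
qed
lemma good_scalar: "good k 0 (ext_scalar c)"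
  by (simp add: good_def ext_scalar_def)
lemma good_vanish: assumes "good k (Suc k) x" shows "x = 0"
proof (rule ext)
  fix S show "x S = 0 S"
  proof (rule ccontr)
    assume "x S \<noteq> 0 S"
    then have "S \<subseteq> {..<k}" "Suc k \<le> card S" using assms by (auto simp: good_def)
    moreover have "card S \<le> k" using card_mono[OF _ \<open>S \<subseteq> {..<k}\<close>] by simp
    ultimately show False by simp
  qed
qed
lemma good_wedge: assumes "good k p x" "good k q y" shows "good k (p + q) (ext_wedge x y)"
  unfolding good_def
proof (intro allI impI)
  fix S assume ne: "ext_wedge x y S \<noteq> 0"
  then have "finite (Pow S)" unfolding ext_wedge_def by (metis sum.infinite)
  then have fS: "finite S" by simp
  from ne obtain A where A: "A \<in> Pow S" "ext_sign A (S - A) * x A * y (S - A) \<noteq> 0"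
    unfolding ext_wedge_def by (metis (no_types, lifting) sum.neutral)
  then have "x A \<noteq> 0" "y (S - A) \<noteq> 0" by auto
  then have h: "A \<subseteq> {..<k}" "p \<le> card A" "S - A \<subseteq> {..<k}" "q \<le> card (S - A)"
    using assms by (auto simp: good_def)
  have "card S = card A + card (S - A)"
    using A(1) fS by (metis Pow_iff card_Diff_subset finite_subset le_add_diff_inverse card_mono)
  then show "S \<subseteq> {..<k} \<and> p + q \<le> card S" using h by auto
qed
lemma wedge_scalar_one: assumes "good k d x" shows "ext_wedge x (ext_scalar 1) = x"
proof (rule ext)
  fix S show "ext_wedge x (ext_scalar 1) S = x S"
  proof (cases "finite S")
    case False
    then have "x S = 0" using assms finite_subset[of S "{..<k}"] by (auto simp: good_def)
    then show ?thesis using False by (simp add: ext_wedge_def)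
  next
    case True
    have "ext_wedge x (ext_scalar 1) S = (\<Sum>A\<in>Pow S. if A = S then ext_sign A (S - A) * x A * 1 else 0)"
      unfolding ext_wedge_def ext_scalar_def
      by (rule sum.cong[OF refl]) auto
    also have "\<dots> = ext_sign S {} * x S" using True by (simp add: sum.delta')
    finally show ?thesis by (simp add: ext_sign_def)
  qed
qed

lemma mm_eq: "ext_mat_mul N X Y = (\<lambda>i j. \<Sum>l\<in>N. ext_wedge (X i l) (Y l j))"
  by (simp add: ext_mat_mul_def ext_sum_eq)

lemma mm_assoc_pt: "ext_mat_mul N (ext_mat_mul N X Y) Z i j = ext_mat_mul N X (ext_mat_mul N Y Z) i j"
  unfolding mm_eq wedge_sum_left wedge_sum_right wedge_assoc by (rule sum.swap)
lemma mm_assoc: "ext_mat_mul N (ext_mat_mul N X Y) Z = ext_mat_mul N X (ext_mat_mul N Y Z)"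
  using mm_assoc_pt by blast

lemma mm_add_left: "ext_mat_mul N (X + X') Y = ext_mat_mul N X Y + ext_mat_mul N X' Y"
  by (simp add: mm_eq fun_eq_iff wedge_add_left sum.distrib)
lemma mm_add_right: "ext_mat_mul N X (Y + Y') = ext_mat_mul N X Y + ext_mat_mul N X Y'"
  by (simp add: mm_eq fun_eq_iff wedge_add_right sum.distrib)
lemma mm_sum_left_pt: "ext_mat_mul N (\<Sum>a\<in>A. f a) Y i j = (\<Sum>a\<in>A. ext_mat_mul N (f a) Y) i j"
  unfolding mm_eq wedge_sum_left sum_fun_apply by (rule ext, rule sum.swap)
lemma mm_sum_left: "ext_mat_mul N (\<Sum>a\<in>A. f a) Y = (\<Sum>a\<in>A. ext_mat_mul N (f a) Y)"
  using mm_sum_left_pt by blast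
lemma mm_sum_right_pt: "ext_mat_mul N X (\<Sum>a\<in>A. f a) i j = (\<Sum>a\<in>A. ext_mat_mul N X (f a)) i j"
  unfolding mm_eq wedge_sum_right sum_fun_apply by (rule ext, rule sum.swap)
lemma mm_sum_right: "ext_mat_mul N X (\<Sum>a\<in>A. f a) = (\<Sum>a\<in>A. ext_mat_mul N X (f a))"
  using mm_sum_right_pt by blast

definition mgood :: "nat \<Rightarrow> nat \<Rightarrow> (nat \<Rightarrow> nat \<Rightarrow> 'a::comm_ring_1 ext) \<Rightarrow> bool" where
  "mgood k d X \<longleftrightarrow> (\<forall>i j. good k d (X i j))"

lemma mgood_mm: "mgood k p X \<Longrightarrow> mgood k q Y \<Longrightarrow> mgood k (p + q) (ext_mat_mul N X Y)"
  unfolding mgood_def mm_eq by (auto intro!: good_sum good_wedge)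
lemma mgood_mono: "mgood k d X \<Longrightarrow> d' \<le> d \<Longrightarrow> mgood k d' X"
  unfolding mgood_def by (auto intro: good_mono)
lemma mgood_sum: "(\<And>a. a \<in> A \<Longrightarrow> mgood k d (f a)) \<Longrightarrow> mgood k d (\<Sum>a\<in>A. f a)"
  unfolding mgood_def by (auto simp: sum_fun_apply intro!: good_sum)
lemma mgood_vanish: "mgood k (Suc k) X \<Longrightarrow> X = 0"
  unfolding mgood_def by (auto simp: fun_eq_iff intro!: good_vanish[THEN fun_cong, simplified])
lemma mgood_pow: "mgood k d X \<Longrightarrow> mgood k (m * d) (ext_mat_pow N X m)"
proof (induction m)
  case 0 then show ?case by (simp add: mgood_def good_scalar ext_zero_eq)
next
  case (Suc m) then show ?case using mgood_mm[of k "m*d" _ d X N] by (simp add: add.commute)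
qed




definition Vm :: "nat \<Rightarrow> nat \<Rightarrow> (nat \<times> nat) set \<Rightarrow> (nat \<Rightarrow> nat \<Rightarrow> 'a::comm_ring_1)
                      \<Rightarrow> (nat \<Rightarrow> nat \<Rightarrow> 'a) \<Rightarrow> nat \<Rightarrow> nat \<Rightarrow> nat \<Rightarrow> 'a ext" where
  "Vm k n E \<chi> y m i j = (\<Sum>w\<in>{w \<in> walks n E. length w = Suc m \<and> hd w = i \<and> last w = j}. walk_ext k \<chi> y w)"

definition Bm :: "nat \<Rightarrow> (nat \<times> nat) set \<Rightarrow> (nat \<Rightarrow> nat \<Rightarrow> 'a::comm_ring_1)
                      \<Rightarrow> (nat \<Rightarrow> nat \<Rightarrow> 'a) \<Rightarrow> nat \<Rightarrow> nat \<Rightarrow> 'a ext" where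
  "Bm k E \<chi> y i l = (if (i, l) \<in> E then ext_wedge (ext_vec k (\<chi> i)) (ext_scalar (y i l)) else 0)"

definition V0 :: "nat \<Rightarrow> nat \<Rightarrow> (nat \<Rightarrow> nat \<Rightarrow> 'a::comm_ring_1) \<Rightarrow> nat \<Rightarrow> nat \<Rightarrow> 'a ext" where
  "V0 k n \<chi> i j = (if i = j \<and> i < n then ext_vec k (\<chi> i) else 0)"

lemma is_walk_nonempty: "is_walk E w \<Longrightarrow> w \<noteq> []"
  by (cases w) auto

lemma is_walk_Cons: "w \<noteq> [] \<Longrightarrow> is_walk E (v # w) \<longleftrightarrow> (v, hd w) \<in> E \<and> is_walk E w"
  by (cases w) auto

lemma walk_ext_Cons: "w \<noteq> [] \<Longrightarrow> walk_ext k \<chi> y (v # w) =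
   ext_wedge (ext_wedge (ext_vec k (\<chi> v)) (ext_scalar (y v (hd w)))) (walk_ext k \<chi> y w)"
  by (cases w) (auto simp: wedge_assoc)

lemma len_minus_less: "w \<noteq> [] \<Longrightarrow> length w \<le> k \<Longrightarrow> length w - 1 < k"
  by (cases w) auto

lemma hd_last_lt: "w \<noteq> [] \<Longrightarrow> set w \<subseteq> {..<n} \<Longrightarrow> hd w < n \<and> last w < n"
  by (meson hd_in_set last_in_set lessThan_iff subsetD)

lemma finite_walks_le: "finite {w \<in> walks n E. length w \<le> m \<and> P w}"
  by (rule finite_subset[OF _ finite_lists_length_le[of "{..<n}" m]]) (auto simp: walks_def)

lemma finite_walks_eq: "finite {w \<in> walks n E. length w = m \<and> P w}"
  by (rule finite_subset[OF _ finite_lists_length_eq[of "{..<n}" m]]) (auto simp: walks_def)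

lemma walk_good: "w \<noteq> [] \<Longrightarrow> good k (length w) (walk_ext k \<chi> y w)"
proof (induction k \<chi> y w rule: walk_ext.induct)
  case (2 k \<chi> y v) then show ?case using good_vec by simp
next
  case (3 k \<chi> y v u w)
  have "good k (1 + (0 + length (u # w))) (walk_ext k \<chi> y (v # u # w))"
    unfolding walk_ext.simps
    by (intro good_wedge good_vec good_scalar) (use 3 in simp)
  then show ?case by simp
qed simp

lemma Vm_good: "mgood k (Suc m) (Vm k n E \<chi> y m)"
  unfolding mgood_def Vm_def
proof (intro allI good_sum)
  fix i j x assume "x \<in> {w \<in> walks n E. length w = Suc m \<and> hd w = i \<and> last w = j}"
  then have "x \<noteq> []" "length x = Suc m" by (auto simp: walks_def dest: is_walk_nonempty)
  then show "good k (Suc m) (walk_ext k \<chi> y x)" using walk_good[of x k \<chi> y] by simp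
qed

lemma Qmat_Vm: "Qmat k n E \<chi> y = (\<Sum>m<k. Vm k n E \<chi> y m)"
proof (intro ext)
  fix i j S
  let ?S = "{w \<in> walks n E. length w \<le> k \<and> hd w = i \<and> last w = j}"
  have "sum (walk_ext k \<chi> y) ?S = (\<Sum>m<k. sum (walk_ext k \<chi> y) {x \<in> ?S. length x - 1 = m})"
  proof (rule sum.group[symmetric])
    show "finite ?S" by (rule finite_walks_le)
    show "(\<lambda>x. length x - 1) ` ?S \<subseteq> {..<k}"
      by (auto simp: walks_def dest!: is_walk_nonempty) (metis One_nat_def len_minus_less)
  qed simp
  also have "\<dots> = (\<Sum>m<k. Vm k n E \<chi> y m i j)"
  proof (rule sum.cong[OF refl])
    fix m assume "m \<in> {..<k}"
    then have "{x \<in> ?S. length x - 1 = m} = {w \<in> walks n E. length w = Suc m \<and> hd w = i \<and> last w = j}"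
      by (auto simp: walks_def dest: is_walk_nonempty)
    then show "sum (walk_ext k \<chi> y) {x \<in> ?S. length x - 1 = m} = Vm k n E \<chi> y m i j"
      by (simp add: Vm_def)
  qed
  finally show "Qmat k n E \<chi> y i j S = (\<Sum>m<k. Vm k n E \<chi> y m) i j S"
    by (simp add: Qmat_def ext_sum_eq sum_fun_apply)
qed

lemma Zwalks_Qmat: "Zwalks k n E \<chi> y = (\<Sum>(i,j)\<in>{..<n} \<times> {..<n}. Qmat k n E \<chi> y i j)"
proof -
  let ?S = "{w \<in> walks n E. length w \<le> k}"
  have "sum (walk_ext k \<chi> y) ?S = (\<Sum>p\<in>{..<n} \<times> {..<n}. sum (walk_ext k \<chi> y) {x \<in> ?S. (hd x, last x) = p})"
  proof (rule sum.group[symmetric])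
    show "finite ?S" using finite_walks_le[of n E k "\<lambda>_. True"] by simp
    show "(\<lambda>x. (hd x, last x)) ` ?S \<subseteq> {..<n} \<times> {..<n}"
      by (auto simp: walks_def dest!: is_walk_nonempty hd_last_lt)
  qed simp
  also have "\<dots> = (\<Sum>(i,j)\<in>{..<n} \<times> {..<n}. Qmat k n E \<chi> y i j)"
  proof (rule sum.cong[OF refl])
    fix p :: "nat \<times> nat" obtain i j where p: "p = (i, j)" by fastforce
    have "{x \<in> ?S. (hd x, last x) = p} = {w \<in> walks n E. length w \<le> k \<and> hd w = i \<and> last w = j}"
      using p by auto
    then show "sum (walk_ext k \<chi> y) {x \<in> ?S. (hd x, last x) = p} = (case p of (i, j) \<Rightarrow> Qmat k n E \<chi> y i j)"
      using p by (simp add: Qmat_def ext_sum_eq)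
  qed
  finally show ?thesis by (simp add: Zwalks_def ext_sum_eq)
qed

lemma Vm_0: "Vm k n E \<chi> y 0 = V0 k n \<chi>"
proof (intro ext)
  fix i j S
  have "{w \<in> walks n E. length w = Suc 0 \<and> hd w = i \<and> last w = j} = (if i = j \<and> i < n then {[i]} else {})"
    by (auto simp: walks_def length_Suc_conv)
  then show "Vm k n E \<chi> y 0 i j S = V0 k n \<chi> i j S"
    by (simp add: Vm_def V0_def)
qed

lemma Vm_Suc:
  assumes E: "E \<subseteq> {..<n} \<times> {..<n}"
  shows "Vm k n E \<chi> y (Suc m) = ext_mat_mul {..<n} (Bm k E \<chi> y) (Vm k n E \<chi> y m)"
proof (intro ext)
  fix i j S
  let ?T = "{w \<in> walks n E. length w = Suc (Suc m) \<and> hd w = i \<and> last w = j}"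
  let ?U = "\<lambda>l. {w \<in> walks n E. length w = Suc m \<and> hd w = l \<and> last w = j}"
  let ?L = "{l. (i, l) \<in> E}"
  have T: "?T = (\<lambda>(l, w). i # w) ` (SIGMA l:?L. ?U l)"
  proof (intro equalityI subsetI)
    fix w assume w: "w \<in> ?T"
    from w obtain w' where w'0: "w = i # w'" by (cases w) (auto simp: walks_def)
    moreover have "w' \<noteq> []" using w w'0 by auto
    ultimately have w': "w = i # w'" "w' \<noteq> []" by auto
    then have "(hd w', w') \<in> (SIGMA l:?L. ?U l)"
      using w by (auto simp: walks_def is_walk_Cons)
    then show "w \<in> (\<lambda>(l, w). i # w) ` (SIGMA l:?L. ?U l)"
      using w' by force
  next
    fix w assume "w \<in> (\<lambda>(l, w). i # w) ` (SIGMA l:?L. ?U l)"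
    then obtain l w' where w': "w = i # w'" "(i, l) \<in> E" "w' \<in> ?U l" by auto
    then have "w' \<noteq> []" by (auto simp: walks_def dest: is_walk_nonempty)
    then show "w \<in> ?T" using w' E by (auto simp: walks_def is_walk_Cons)
  qed
  have inj: "inj_on (\<lambda>(l, w). i # w) (SIGMA l:?L. ?U l)"
    by (auto simp: inj_on_def)
  have fL: "finite ?L" by (rule finite_subset[of _ "{..<n}"]) (use E in auto)
  have "Vm k n E \<chi> y (Suc m) i j = (\<Sum>(l, w)\<in>(SIGMA l:?L. ?U l). walk_ext k \<chi> y (i # w))"
    unfolding Vm_def T by (subst sum.reindex[OF inj]) (simp add: case_prod_unfold)
  also have "\<dots> = (\<Sum>l\<in>?L. \<Sum>w\<in>?U l. walk_ext k \<chi> y (i # w))"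
    by (subst sum.Sigma) (use fL finite_walks_eq in auto)
  also have "\<dots> = (\<Sum>l\<in>?L. ext_wedge (Bm k E \<chi> y i l) (Vm k n E \<chi> y m l j))"
  proof (rule sum.cong[OF refl])
    fix l assume l: "l \<in> ?L"
    have "(\<Sum>w\<in>?U l. walk_ext k \<chi> y (i # w)) = (\<Sum>w\<in>?U l. ext_wedge (Bm k E \<chi> y i l) (walk_ext k \<chi> y w))"
    proof (rule sum.cong[OF refl])
      fix w assume "w \<in> ?U l"
      then have "w \<noteq> []" "hd w = l" by (auto simp: walks_def dest: is_walk_nonempty)
      then show "walk_ext k \<chi> y (i # w) = ext_wedge (Bm k E \<chi> y i l) (walk_ext k \<chi> y w)"
        using l by (simp add: walk_ext_Cons Bm_def)
    qed
    then show "(\<Sum>w\<in>?U l. walk_ext k \<chi> y (i # w)) = ext_wedge (Bm k E \<chi> y i l) (Vm k n E \<chi> y m l j)"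
      by (simp add: Vm_def wedge_sum_right)
  qed
  also have "\<dots> = (\<Sum>l\<in>{..<n}. ext_wedge (Bm k E \<chi> y i l) (Vm k n E \<chi> y m l j))"
    by (rule sum.mono_neutral_left) (use E in \<open>auto simp: Bm_def\<close>)
  finally show "Vm k n E \<chi> y (Suc m) i j S = ext_mat_mul {..<n} (Bm k E \<chi> y) (Vm k n E \<chi> y m) i j S"
    by (simp add: mm_eq)
qed




locale upd =
  fixes n k :: nat and E Ep Em E' :: "(nat \<times> nat) set"
    and \<chi> :: "nat \<Rightarrow> nat \<Rightarrow> 'a::field" and y :: "nat \<Rightarrow> nat \<Rightarrow> 'a"
    and I :: "nat set" and D :: "nat \<Rightarrow> nat \<Rightarrow> 'a ext"
  assumes k1: "k \<ge> 1"
    and EN: "E \<subseteq> {..<n} \<times> {..<n}"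
    and EpN: "Ep \<subseteq> {..<n} \<times> {..<n}"
    and dis: "Ep \<inter> E = {}"
    and EmE: "Em \<subseteq> E"
    and E'_def: "E' = (E - Em) \<union> Ep"
    and I_def: "I = {i. \<exists>j. (i, j) \<in> Ep \<union> Em \<or> (j, i) \<in> Ep \<union> Em}"
    and D_def: "D = (\<lambda>i j. if (i, j) \<in> Ep then ext_scalar (y i j)
                     else if (i, j) \<in> Em then ext_scalar (- y i j) else ext_zero)"
begin

abbreviation "N \<equiv> {..<n}"
abbreviation "V \<equiv> Vm k n E \<chi> y"
abbreviation "V' \<equiv> Vm k n E' \<chi> y"
abbreviation "Q \<equiv> Qmat k n E \<chi> y"
abbreviation "Q' \<equiv> Qmat k n E' \<chi> y"
abbreviation "mm \<equiv> ext_mat_mul"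

lemma E'N: "E' \<subseteq> N \<times> N" using EN EpN by (auto simp: E'_def)

lemma IN: "I \<subseteq> N" using EN EpN EmE by (auto simp: I_def)
lemma finI: "finite I" using IN finite_subset by blast

lemma D_out: "i \<notin> I \<or> j \<notin> I \<Longrightarrow> D i j = 0"
  by (auto simp: D_def I_def ext_zero_eq)

lemma D_good: "mgood k 0 D"
  by (auto simp: mgood_def D_def good_scalar ext_zero_eq)

lemma B_split: "Bm k E' \<chi> y = Bm k E \<chi> y + mm N (V0 k n \<chi>) D"
proof (intro ext)
  fix i l S
  have "mm N (V0 k n \<chi>) D i l = (\<Sum>i'\<in>N. if i = i' then (if i < n then ext_wedge (ext_vec k (\<chi> i)) (D i l) else 0) else 0)"
    unfolding mm_eq V0_def by (rule sum.cong) auto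
  also have "\<dots> = (if i < n then ext_wedge (ext_vec k (\<chi> i)) (D i l) else 0)" by simp
  also have "\<dots> = ext_wedge (ext_vec k (\<chi> i)) (D i l)"
    using EpN EmE EN by (auto simp: D_def ext_zero_eq)
  finally have C: "mm N (V0 k n \<chi>) D i l = ext_wedge (ext_vec k (\<chi> i)) (D i l)" .
  have "Bm k E' \<chi> y i l = Bm k E \<chi> y i l + ext_wedge (ext_vec k (\<chi> i)) (D i l)"
    using dis EmE by (auto simp: Bm_def D_def E'_def ext_scalar_uminus wedge_uminus_right ext_zero_eq)
  then show "Bm k E' \<chi> y i l S = (Bm k E \<chi> y + mm N (V0 k n \<chi>) D) i l S"
    using C by simp
qed

lemma graded:
  "V' m = V m + (\<Sum>q<m. mm N (mm N (V (m - Suc q)) D) (V' q))"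
proof (induction m)
  case 0 then show ?case by (simp add: Vm_0)
next
  case (Suc m)
  have "V' (Suc m) = mm N (Bm k E \<chi> y) (V' m) + mm N (mm N (V0 k n \<chi>) D) (V' m)"
    using Vm_Suc[OF E'N] B_split mm_add_left by metis
  also have "mm N (Bm k E \<chi> y) (V' m) = V (Suc m) + (\<Sum>q<m. mm N (mm N (V (Suc m - Suc q)) D) (V' q))"
  proof -
    have "mm N (Bm k E \<chi> y) (V' m) = mm N (Bm k E \<chi> y) (V m) + (\<Sum>q<m. mm N (Bm k E \<chi> y) (mm N (mm N (V (m - Suc q)) D) (V' q)))"
      by (subst Suc.IH) (simp add: mm_add_right mm_sum_right)
    also have "mm N (Bm k E \<chi> y) (V m) = V (Suc m)" by (simp add: Vm_Suc[OF EN])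
    also have "(\<Sum>q<m. mm N (Bm k E \<chi> y) (mm N (mm N (V (m - Suc q)) D) (V' q)))
             = (\<Sum>q<m. mm N (mm N (V (Suc m - Suc q)) D) (V' q))"
    proof (rule sum.cong[OF refl])
      fix q assume "q \<in> {..<m}"
      then have "Suc m - Suc q = Suc (m - Suc q)" by simp
      then show "mm N (Bm k E \<chi> y) (mm N (mm N (V (m - Suc q)) D) (V' q)) = mm N (mm N (V (Suc m - Suc q)) D) (V' q)"
        by (simp only: Vm_Suc[OF EN] mm_assoc)
    qed
    finally show ?thesis .
  qed
  also have "mm N (mm N (V0 k n \<chi>) D) (V' m) = mm N (mm N (V (Suc m - Suc m)) D) (V' m)"
    by (simp add: Vm_0)
  finally show ?case by (simp add: add.assoc)
qed

lemma Q_good: "mgood k 1 Q"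
  unfolding Qmat_Vm by (rule mgood_sum, rule mgood_mono[OF Vm_good], simp)
lemma Q'_good: "mgood k 1 Q'"
  unfolding Qmat_Vm by (rule mgood_sum, rule mgood_mono[OF Vm_good], simp)

lemma term_vanish: "k \<le> Suc (p + q) \<Longrightarrow> mm N (mm N (V p) D) (V' q) = 0"
proof -
  assume "k \<le> Suc (p + q)"
  have "mgood k (Suc p + 0 + Suc q) (mm N (mm N (V p) D) (V' q))"
    by (intro mgood_mm Vm_good D_good)
  then show ?thesis using \<open>k \<le> Suc (p + q)\<close> by (intro mgood_vanish) (erule mgood_mono, simp)
qed

lemma resolvent_N: "Q' = Q + mm N (mm N Q D) Q'"
proof -
  let ?g = "\<lambda>p q. mm N (mm N (V p) D) (V' q)"
  have "Q' = (\<Sum>m<k. V' m)" by (rule Qmat_Vm)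
  also have "\<dots> = (\<Sum>m<k. V m + (\<Sum>q<m. mm N (mm N (V (m - Suc q)) D) (V' q)))"
    by (rule sum.cong[OF refl], rule graded)
  also have "\<dots> = Q + (\<Sum>m<k. \<Sum>q<m. ?g (m - Suc q) q)"
    by (simp add: sum.distrib Qmat_Vm)
  also have "(\<Sum>m<k. \<Sum>q<m. ?g (m - Suc q) q) = (\<Sum>(p,q)\<in>{(p,q). Suc (p + q) < k}. ?g p q)"
  proof -
    have "(\<Sum>m<k. \<Sum>q<m. ?g (m - Suc q) q) = (\<Sum>(m,q)\<in>(SIGMA m:{..<k}. {..<m}). ?g (m - Suc q) q)"
      by (rule sum.Sigma) auto
    also have "\<dots> = (\<Sum>(p,q)\<in>{(p,q). Suc (p + q) < k}. ?g p q)"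
      by (rule sum.reindex_bij_witness[where j="\<lambda>(m,q). (m - Suc q, q)" and i="\<lambda>(p,q). (Suc (p+q), q)"]) auto
    finally show ?thesis .
  qed
  also have "\<dots> = (\<Sum>(p,q)\<in>{..<k} \<times> {..<k}. ?g p q)"
    by (rule sum.mono_neutral_left) (auto intro!: term_vanish)
  also have "\<dots> = mm N (mm N Q D) Q'"
    unfolding Qmat_Vm mm_sum_left mm_sum_right sum.cartesian_product[symmetric] by (rule sum.swap)
  finally show ?thesis .
qed


lemma mm_N_right: "mm N X D = mm I X D"
proof (intro ext)
  fix i j S
  have "mm N X D i j = mm I X D i j"
    unfolding mm_eq by (rule sum.mono_neutral_right) (use IN D_out in auto)
  then show "mm N X D i j S = mm I X D i j S" by simp
qed

lemma mmI_col: "l \<notin> I \<Longrightarrow> mm I X D i l = 0"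
  unfolding mm_eq by (rule sum.neutral) (simp add: D_out)

lemma resolvent_I: "Q' = Q + mm I (mm I Q D) Q'"
proof -
  have "mm N (mm N Q D) Q' = mm I (mm I Q D) Q'"
  proof (intro ext)
    fix i j S
    have "mm N (mm I Q D) Q' i j = mm I (mm I Q D) Q' i j"
      unfolding mm_eq[of N] mm_eq[of I "mm I Q D"]
      by (rule sum.mono_neutral_right) (use IN mmI_col in auto)
    then show "mm N (mm N Q D) Q' i j S = mm I (mm I Q D) Q' i j S" by (simp add: mm_N_right)
  qed
  then show ?thesis using resolvent_N by simp
qed

abbreviation "P \<equiv> mm I Q D"
definition "R t = mm I D (ext_mat_pow I P (t - 1))"

lemma R1: "R 1 = D"
proof (intro ext)
  fix a b S
  have "R 1 a b = (\<Sum>l\<in>I. if l = b then ext_wedge (D a l) (ext_scalar 1) else 0)"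
    unfolding R_def mm_eq by (rule sum.cong) (auto simp: ext_zero_eq)
  also have "\<dots> = (if b \<in> I then ext_wedge (D a b) (ext_scalar 1) else 0)"
    using finI by simp
  also have "\<dots> = D a b"
    using D_out[of a b] wedge_scalar_one[of k 0 "D a b"] D_good by (auto simp: mgood_def)
  finally show "R 1 a b S = D a b S" by simp
qed

lemma R_Suc: "mm I (R (Suc t)) P = R (Suc (Suc t))"
  by (simp add: R_def mm_assoc)

lemma iter: "Q' = Q + (\<Sum>t\<in>{1..T}. mm I (mm I Q (R t)) Q) + mm I (mm I Q (R (Suc T))) Q'"
proof (induction T)
  case 0
  have "R (Suc 0) = D" using R1 by simp
  then show ?case using resolvent_I by simp
next
  case (Suc T)
  have "mm I (mm I Q (R (Suc T))) Q' = mm I (mm I Q (R (Suc T))) (Q + mm I P Q')"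
    by (rule arg_cong[where f="mm I (mm I Q (R (Suc T)))"], rule resolvent_I)
  also have "\<dots> = mm I (mm I Q (R (Suc T))) Q + mm I (mm I Q (R (Suc T))) (mm I P Q')"
    by (rule mm_add_right)
  also have "mm I (mm I Q (R (Suc T))) (mm I P Q') = mm I (mm I Q (R (Suc (Suc T)))) Q'"
    by (simp only: mm_assoc R_Suc[symmetric])
  finally have X: "mm I (mm I Q (R (Suc T))) Q' = mm I (mm I Q (R (Suc T))) Q + mm I (mm I Q (R (Suc (Suc T)))) Q'" .
  have S: "(\<Sum>t\<in>{1..Suc T}. mm I (mm I Q (R t)) Q) = (\<Sum>t\<in>{1..T}. mm I (mm I Q (R t)) Q) + mm I (mm I Q (R (Suc T))) Q"
    by (simp only: sum.cl_ivl_Suc) simp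
  show ?case
    apply (subst Suc.IH)
    apply (simp only: X S add.assoc)
    done
qed

lemma P_good: "mgood k 1 P"
  using mgood_mm[OF Q_good D_good, where N=I] by simp

lemma R_good: "mgood k t (R (Suc t))"
  unfolding R_def using mgood_mm[OF D_good mgood_pow[OF P_good, where N=I and m=t], where N=I] by simp

lemma final_Q': "Q' = Q + (\<Sum>t\<in>{1..k}. mm I (mm I Q (R t)) Q)"
proof -
  have "mgood k (1 + k + 1) (mm I (mm I Q (R (Suc k))) Q')"
    by (intro mgood_mm Q_good Q'_good R_good)
  then have Z: "mm I (mm I Q (R (Suc k))) Q' = 0"
    by (intro mgood_vanish) (erule mgood_mono, simp)
  have "Q' = Q + (\<Sum>t\<in>{1..k}. mm I (mm I Q (R t)) Q) + mm I (mm I Q (R (Suc k))) Q'" by (rule iter)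
  also note Z
  finally show ?thesis by (simp only: add_0_right)
qed

end

lemma reorder:
  "(\<Sum>(i,j)\<in>N \<times> N. ext_mat_mul I (ext_mat_mul I Q R) Q i j) =
   (\<Sum>(a,b)\<in>I \<times> I. ext_wedge (ext_wedge (\<Sum>i\<in>N. Q i a) (R a b)) (\<Sum>j\<in>N. Q b j))"
proof -
  let ?h = "\<lambda>i j a b. ext_wedge (ext_wedge (Q i a) (R a b)) (Q b j)"
  have L: "(\<Sum>(i,j)\<in>N \<times> N. ext_mat_mul I (ext_mat_mul I Q R) Q i j) = (\<Sum>b\<in>I. \<Sum>a\<in>I. \<Sum>i\<in>N. \<Sum>j\<in>N. ?h i j a b)"
    unfolding sum.cartesian_product[symmetric] mm_eq wedge_sum_left
    by (simp only: sum.swap[of _ N I])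
  have R: "(\<Sum>(a,b)\<in>I \<times> I. ext_wedge (ext_wedge (\<Sum>i\<in>N. Q i a) (R a b)) (\<Sum>j\<in>N. Q b j)) = (\<Sum>a\<in>I. \<Sum>b\<in>I. \<Sum>j\<in>N. \<Sum>i\<in>N. ?h i j a b)"
    unfolding sum.cartesian_product[symmetric] wedge_sum_left wedge_sum_right ..
  show ?thesis unfolding L R
    by (subst sum.swap, rule sum.cong[OF refl], rule sum.cong[OF refl], rule sum.swap)
qed


context upd begin

lemma main_loc: "Zwalks k n E' \<chi> y =
    ext_add (Zsum k n E \<chi> y)
      (ext_sum (\<lambda>t. ext_sum (\<lambda>(a, b).
          ext_wedge (ext_wedge (Fvec k n E \<chi> y a)
             (ext_mat_mul I D (ext_mat_pow I (ext_mat_mul I (Qmat k n E \<chi> y) D) (t - 1)) a b))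
           (Svec k n E \<chi> y b)) (I \<times> I)) {1..k})"
proof -
  let ?M = "\<lambda>t. mm I (mm I Q (R t)) Q"
  have eq1: "Q' i j = Q i j + (\<Sum>t\<in>{1..k}. ?M t i j)" for i j
    by (subst final_Q') (simp only: plus_fun_apply sum_fun_apply)
  have "Zwalks k n E' \<chi> y = (\<Sum>(i,j)\<in>N \<times> N. Q' i j)" by (rule Zwalks_Qmat)
  also have "\<dots> = (\<Sum>(i,j)\<in>N \<times> N. Q i j + (\<Sum>t\<in>{1..k}. ?M t i j))"
    by (rule sum.cong[OF refl]) (auto simp only: eq1 split: prod.split)
  also have "\<dots> = (\<Sum>(i,j)\<in>N \<times> N. Q i j) + (\<Sum>(i,j)\<in>N \<times> N. \<Sum>t\<in>{1..k}. ?M t i j)"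
    unfolding case_prod_unfold by (rule sum.distrib)
  also have "(\<Sum>(i,j)\<in>N \<times> N. \<Sum>t\<in>{1..k}. ?M t i j) = (\<Sum>t\<in>{1..k}. \<Sum>(i,j)\<in>N \<times> N. ?M t i j)"
    unfolding case_prod_unfold by (rule sum.swap)
  also have "\<dots> = (\<Sum>t\<in>{1..k}. \<Sum>(a,b)\<in>I \<times> I. ext_wedge (ext_wedge (\<Sum>i\<in>N. Q i a) (R t a b)) (\<Sum>j\<in>N. Q b j))"
    by (rule sum.cong[OF refl], rule reorder)
  finally show ?thesis
    unfolding ext_add_eq ext_sum_eq Zsum_def Fvec_def Svec_def R_def .
qed

end

theorem mainTheorem9:
  fixes n k :: nat
    and E Ep Em :: "(nat \<times> nat) set"
    and \<chi> :: "nat \<Rightarrow> nat \<Rightarrow> 'a::field"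
    and y :: "nat \<Rightarrow> nat \<Rightarrow> 'a"
  assumes "k \<ge> 1"
    and "E \<subseteq> {..<n} \<times> {..<n}"
    and "Ep \<subseteq> {..<n} \<times> {..<n}"
    and "Ep \<inter> E = {}"
    and "Em \<subseteq> E"
  defines "E' \<equiv> (E - Em) \<union> Ep"
    and "I \<equiv> {i. \<exists>j. (i, j) \<in> Ep \<union> Em \<or> (j, i) \<in> Ep \<union> Em}"
    and "\<Delta> \<equiv> (\<lambda>i j. if (i, j) \<in> Ep then ext_scalar (y i j)
                     else if (i, j) \<in> Em then ext_scalar (- y i j) else ext_zero)"
  shows "Zwalks k n E' \<chi> y =
    ext_add (Zsum k n E \<chi> y)
      (ext_sum (\<lambda>t. ext_sum (\<lambda>(a, b).
          ext_wedge (ext_wedge (Fvec k n E \<chi> y a)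
             (ext_mat_mul I \<Delta> (ext_mat_pow I (ext_mat_mul I (Qmat k n E \<chi> y) \<Delta>) (t - 1)) a b))
           (Svec k n E \<chi> y b)) (I \<times> I)) {1..k})"
proof -
  interpret U: upd n k E Ep Em E' \<chi> y I \<Delta>
    using assms by unfold_locales (simp_all add: E'_def I_def \<Delta>_def)
  show ?thesis by (rule U.main_loc)
qed

end
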